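(* Let $R$ be a ring. Then $R$ is strongly weakly nil-clean if, and only if, $R$ is both WUU and GWNC.
   Context: All rings are associative with identity. For a ring $S$, $U(S)$, ${\rm Nil}(S)$, ${\rm Id}(S)$ denote units, nilpotents, idempotents. $S$ is GWNC if every $a\in S\setminus U(S)$ can be written as $a=q+e$ or $a=q-e$ with $q\in{\rm Nil}(S)$, $e\in{\rm Id}(S)$. An element $a$ is strongly nil-clean if $a=e+b$ with $e$ idempotent, $b$ nilpotent and $eb=be$. $R$ is strongly weakly nil-clean if for every $a\in R$, $a$ or $-a$ is strongly nil-clean. $R$ is WUU if $U(R)={\rm Nil}(R)\pm 1$, i.e. every unit has the form $q+1$ or $q-1$ with $q$ nilpotent. *)

theory Defs
  imports Main
begin

definition units_of_ring :: "'a::ring_1 set" where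
  "units_of_ring = {u. \<exists>v. u * v = 1 \<and> v * u = 1}"

definition nilpotents :: "'a::ring_1 set" where
  "nilpotents = {q. \<exists>n::nat. q ^ n = 0}"

definition idempotents :: "'a::ring_1 set" where
  "idempotents = {e. e * e = e}"

definition strongly_nil_clean_elem :: "'a::ring_1 \<Rightarrow> bool" where
  "strongly_nil_clean_elem a \<longleftrightarrow>
     (\<exists>e b. e \<in> idempotents \<and> b \<in> nilpotents \<and> a = e + b \<and> e * b = b * e)"

definition strongly_weakly_nil_clean :: "'a::ring_1 itself \<Rightarrow> bool" where
  "strongly_weakly_nil_clean _ \<longleftrightarrow>
     (\<forall>a::'a. strongly_nil_clean_elem a \<or> strongly_nil_clean_elem (- a))"

definition WUU :: "'a::ring_1 itself \<Rightarrow> bool" where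
  "WUU _ \<longleftrightarrow>
     (units_of_ring :: 'a set) = {q + 1 | q. q \<in> nilpotents} \<union> {q - 1 | q. q \<in> nilpotents}"

definition GWNC :: "'a::ring_1 itself \<Rightarrow> bool" where
  "GWNC _ \<longleftrightarrow>
     (\<forall>a::'a. a \<notin> units_of_ring \<longrightarrow>
        (\<exists>q e. q \<in> nilpotents \<and> e \<in> idempotents \<and> (a = q + e \<or> a = q - e)))"

end

theory Submission
  imports Defs
begin


lemma nilI: "x ^ n = 0 \<Longrightarrow> x \<in> nilpotents"
  unfolding nilpotents_def by blast

lemma nilE: "x \<in> nilpotents \<Longrightarrow> (\<And>n. x ^ n = 0 \<Longrightarrow> P) \<Longrightarrow> P"
  unfolding nilpotents_def by blast

lemma comm_pow: "(x::'a::ring_1) * y = y * x \<Longrightarrow> x ^ n * y = y * x ^ n"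
  by (rule power_commuting_commutes)

lemma comm_pow2: "(x::'a::ring_1) * y = y * x \<Longrightarrow> x ^ m * y ^ n = y ^ n * x ^ m"
  by (metis comm_pow)

lemma comm_mult_pow: "(x::'a::ring_1) * y = y * x \<Longrightarrow> (x * y) ^ n = x ^ n * y ^ n"
proof (induct n)
  case 0 then show ?case by simp
next
  case (Suc n)
  have "(x * y) ^ Suc n = x * y * (x ^ n * y ^ n)" by (simp only: power_Suc Suc(1)[OF Suc(2)])
  also have "\<dots> = x * (y * x ^ n) * y ^ n" by (simp add: mult.assoc)
  also have "\<dots> = x * (x ^ n * y) * y ^ n" using comm_pow[OF Suc(2), of n] by simp
  also have "\<dots> = x ^ Suc n * y ^ Suc n" by (simp add: mult.assoc)
  finally show ?case .
qed

lemma nil_mult_comm: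
  assumes "(x::'a::ring_1) * y = y * x" "x \<in> nilpotents"
  shows "x * y \<in> nilpotents" "y * x \<in> nilpotents"
proof -
  obtain n where "x ^ n = 0" using assms(2) by (rule nilE)
  then have "(x * y) ^ n = 0" using comm_mult_pow[OF assms(1)] by simp
  then show "x * y \<in> nilpotents" "y * x \<in> nilpotents" using assms(1) by (auto intro: nilI)
qed

lemma nil_uminus: "(x::'a::ring_1) \<in> nilpotents \<Longrightarrow> - x \<in> nilpotents"
proof -
  assume "x \<in> nilpotents"
  then obtain n where "x ^ n = 0" by (rule nilE)
  then have "(- x) ^ n = 0" by (simp add: power_minus[of x n])
  then show ?thesis by (rule nilI)
qed

lemma nil_uminus_iff: "- (x::'a::ring_1) \<in> nilpotents \<longleftrightarrow> x \<in> nilpotents"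
  using nil_uminus[of x] nil_uminus[of "-x"] by auto

lemma nil_add_comm_aux:
  assumes c: "(x::'a::ring_1) * y = y * x" and xm: "x ^ m = 0" and yn: "y ^ n = 0"
  shows "\<forall>a b. m + n \<le> a + b + k \<longrightarrow> x ^ a * y ^ b * (x + y) ^ k = 0"
proof (induct k)
  case 0
  show ?case
  proof (intro allI impI)
    fix a b assume "m + n \<le> a + b + 0"
    then have "m \<le> a \<or> n \<le> b" by arith
    then show "x ^ a * y ^ b * (x + y) ^ 0 = 0"
    proof
      assume "m \<le> a" then have "x ^ a = 0" using xm by (metis le_add_diff_inverse power_add mult_zero_left)
      then show ?thesis by simp
    next
      assume "n \<le> b" then have "y ^ b = 0" using yn by (metis le_add_diff_inverse power_add mult_zero_left)
      then show ?thesis by simp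
    qed
  qed
next
  case (Suc k)
  show ?case
  proof (intro allI impI)
    fix a b assume h: "m + n \<le> a + b + Suc k"
    have yx: "y ^ b * x = x * y ^ b" using comm_pow[of y x b] c by simp
    have "x ^ a * y ^ b * (x + y) ^ Suc k = x ^ a * (y ^ b * x) * (x + y) ^ k + x ^ a * y ^ b * y * (x + y) ^ k"
      by (simp only: power_Suc distrib_left distrib_right mult.assoc)
    also have "\<dots> = x ^ Suc a * y ^ b * (x + y) ^ k + x ^ a * y ^ Suc b * (x + y) ^ k"
    proof -
      have "x ^ a * (y ^ b * x) = x ^ Suc a * y ^ b"
        by (simp only: yx mult.assoc[symmetric] power_Suc2)
      moreover have "x ^ a * y ^ b * y = x ^ a * y ^ Suc b"
        by (simp only: mult.assoc power_Suc2)
      ultimately show ?thesis by (simp only:)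
    qed
    also have "\<dots> = 0"
    proof -
      have "m + n \<le> Suc a + b + k" "m + n \<le> a + Suc b + k" using h by simp_all
      then have "x ^ Suc a * y ^ b * (x + y) ^ k = 0" "x ^ a * y ^ Suc b * (x + y) ^ k = 0"
        using Suc by blast+
      then show ?thesis by (simp only: add_0)
    qed
    finally show "x ^ a * y ^ b * (x + y) ^ Suc k = 0" .
  qed
qed

lemma nil_add_comm:
  assumes "(x::'a::ring_1) * y = y * x" "x \<in> nilpotents" "y \<in> nilpotents"
  shows "x + y \<in> nilpotents"
proof -
  obtain m where m: "x ^ m = 0" using assms(2) by (rule nilE)
  obtain n where n: "y ^ n = 0" using assms(3) by (rule nilE)
  have H: "\<forall>a b. m + n \<le> a + b + (m + n) \<longrightarrow> x ^ a * y ^ b * (x + y) ^ (m + n) = 0"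
    by (rule nil_add_comm_aux[OF assms(1) m n])
  have "m + n \<le> 0 + 0 + (m + n)" by simp
  then have "x ^ 0 * y ^ 0 * (x + y) ^ (m + n) = 0" using H by blast
  then have "(x + y) ^ (m + n) = 0" by simp
  then show ?thesis by (rule nilI)
qed

lemma nil_diff_comm:
  assumes "(x::'a::ring_1) * y = y * x" "x \<in> nilpotents" "y \<in> nilpotents"
  shows "x - y \<in> nilpotents"
proof -
  have "x * - y = - y * x" using assms(1) by simp
  then have "x + - y \<in> nilpotents" using nil_add_comm[of x "-y"] assms nil_uminus by blast
  then show ?thesis by simp
qed

lemma nil_pow: "(x::'a::ring_1) ^ k \<in> nilpotents \<Longrightarrow> x \<in> nilpotents"
proof -
  assume "x ^ k \<in> nilpotents"
  then obtain n where "(x ^ k) ^ n = 0" by (rule nilE)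
  then have "x ^ (k * n) = 0" by (simp add: power_mult)
  then show ?thesis by (rule nilI)
qed

lemma nil_zero_one: "(1::'a::ring_1) \<in> nilpotents \<Longrightarrow> (x::'a) = 0"
proof -
  assume "(1::'a) \<in> nilpotents"
  then have "(1::'a) = 0" by (auto elim: nilE)
  then have "x * 1 = x * 0" by simp
  then show ?thesis by simp
qed



lemma unitI: "(u::'a::ring_1) * v = 1 \<Longrightarrow> v * u = 1 \<Longrightarrow> u \<in> units_of_ring"
  unfolding units_of_ring_def by blast

lemma unitE: "(u::'a::ring_1) \<in> units_of_ring \<Longrightarrow> (\<And>v. u * v = 1 \<Longrightarrow> v * u = 1 \<Longrightarrow> P) \<Longrightarrow> P"
  unfolding units_of_ring_def by blast

lemma unit_mult:
  assumes "(u::'a::ring_1) \<in> units_of_ring" "w \<in> units_of_ring"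
  shows "u * w \<in> units_of_ring"
proof -
  obtain u' where u: "u * u' = 1" "u' * u = 1" using assms(1) by (rule unitE)
  obtain w' where w: "w * w' = 1" "w' * w = 1" using assms(2) by (rule unitE)
  have "u * w * (w' * u') = 1" by (simp add: mult.assoc[symmetric] u) (simp add: mult.assoc w u)
  moreover have "w' * u' * (u * w) = 1" by (simp add: mult.assoc[symmetric] w) (simp add: mult.assoc u w)
  ultimately show ?thesis by (rule unitI)
qed

lemma unit_uminus: "(u::'a::ring_1) \<in> units_of_ring \<Longrightarrow> - u \<in> units_of_ring"
  by (erule unitE) (rule unitI[of _ "- v" for v], simp_all)

lemma unit_one: "(1::'a::ring_1) \<in> units_of_ring"
  by (rule unitI[of _ 1]) simp_all

lemma geom_left: "(1 - (q::'a::ring_1)) * (\<Sum>i<n. q ^ i) = 1 - q ^ n"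
proof (induct n)
  case 0 then show ?case by simp
next
  case (Suc n)
  have "(1 - q) * (\<Sum>i<Suc n. q ^ i) = (1 - q) * (\<Sum>i<n. q ^ i) + (1 - q) * q ^ n"
    by (simp add: distrib_left)
  also have "\<dots> = 1 - q ^ n + (q ^ n - q ^ Suc n)" by (simp only: Suc) (simp add: algebra_simps power_commutes)
  finally show ?case by simp
qed

lemma geom_right: "(\<Sum>i<n. (q::'a::ring_1) ^ i) * (1 - q) = 1 - q ^ n"
proof (induct n)
  case 0 then show ?case by simp
next
  case (Suc n)
  have "(\<Sum>i<Suc n. q ^ i) * (1 - q) = (\<Sum>i<n. q ^ i) * (1 - q) + q ^ n * (1 - q)"
    by (simp add: distrib_right)
  also have "\<dots> = 1 - q ^ n + (q ^ n - q ^ Suc n)" by (simp only: Suc) (simp add: algebra_simps power_commutes)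
  finally show ?case by simp
qed

lemma unit_one_minus_nil: "(q::'a::ring_1) \<in> nilpotents \<Longrightarrow> 1 - q \<in> units_of_ring"
proof -
  assume "q \<in> nilpotents"
  then obtain n where "q ^ n = 0" by (rule nilE)
  then show ?thesis using geom_left[of q n] geom_right[of q n] by (intro unitI) auto
qed

lemma unit_one_plus_nil: "(q::'a::ring_1) \<in> nilpotents \<Longrightarrow> 1 + q \<in> units_of_ring"
  using unit_one_minus_nil[OF nil_uminus[of q]] by simp

lemma unit_nil_plus_one: "(q::'a::ring_1) \<in> nilpotents \<Longrightarrow> q + 1 \<in> units_of_ring"
  by (metis add.commute unit_one_plus_nil)

lemma unit_nil_minus_one: "(q::'a::ring_1) \<in> nilpotents \<Longrightarrow> q - 1 \<in> units_of_ring"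
  using unit_uminus[OF unit_one_minus_nil[of q]] by simp

lemma one_plus_swap:
  assumes "1 + (a::'a::ring_1) * b \<in> units_of_ring"
  shows "1 + b * a \<in> units_of_ring"
proof -
  obtain v where v: "(1 + a * b) * v = 1" "v * (1 + a * b) = 1" using assms by (rule unitE)
  have "(1 + b * a) * (1 - b * v * a) = 1 + b * a - b * ((1 + a * b) * v) * a"
    by (simp add: algebra_simps)
  also have "\<dots> = 1" using v by simp
  finally have 1: "(1 + b * a) * (1 - b * v * a) = 1" .
  have "(1 - b * v * a) * (1 + b * a) = 1 + b * a - b * (v * (1 + a * b)) * a"
    by (simp add: algebra_simps)
  also have "\<dots> = 1" using v by simp
  finally have 2: "(1 - b * v * a) * (1 + b * a) = 1" .
  show ?thesis using 1 2 by (rule unitI)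
qed

lemma unit_sub_comm_nil:
  assumes u: "(u::'a::ring_1) \<in> units_of_ring" and b: "b \<in> nilpotents" and c: "b * u = u * b"
  shows "u - b \<in> units_of_ring"
proof -
  obtain v where v: "u * v = 1" "v * u = 1" using u by (rule unitE)
  have vb: "v * b = b * v"
  proof -
    have "v * b = v * b * (u * v)" using v by simp
    also have "\<dots> = v * (b * u) * v" by (simp add: mult.assoc)
    also have "\<dots> = v * (u * b) * v" using c by simp
    also have "\<dots> = b * v" by (simp add: mult.assoc[symmetric] v)
    finally show ?thesis .
  qed
  have "v * b \<in> nilpotents" using nil_mult_comm(2)[OF vb[symmetric] b] .
  then have "1 - v * b \<in> units_of_ring" by (rule unit_one_minus_nil)
  then have "u * (1 - v * b) \<in> units_of_ring" using u by (simp add: unit_mult)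
  moreover have "u * (1 - v * b) = u - b" by (simp add: right_diff_distrib mult.assoc[symmetric] v)
  ultimately show ?thesis by simp
qed

lemma idem_unit: "(e::'a::ring_1) * e = e \<Longrightarrow> e \<in> units_of_ring \<Longrightarrow> e = 1"
proof -
  assume e: "e * e = e" "e \<in> units_of_ring"
  then obtain v where v: "e * v = 1" "v * e = 1" by (auto elim: unitE)
  have "e = e * e * v" using v by (simp add: mult.assoc)
  also have "\<dots> = 1" using e v by simp
  finally show ?thesis .
qed

lemma WUU_unit:
  assumes "WUU TYPE('a::ring_1)" "(u::'a) \<in> units_of_ring"
  shows "\<exists>q\<in>nilpotents. u = q + 1 \<or> u = q - 1"
  using assms unfolding WUU_def by blast

definition Jr :: "'a::ring_1 set" where
  "Jr = {z. \<forall>r. 1 + r * z \<in> units_of_ring}"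

lemma JrI: "(\<And>r. 1 + r * (z::'a::ring_1) \<in> units_of_ring) \<Longrightarrow> z \<in> Jr"
  unfolding Jr_def by blast

lemma JrD: "(z::'a::ring_1) \<in> Jr \<Longrightarrow> 1 + r * z \<in> units_of_ring"
  unfolding Jr_def by blast

lemma Jr_add:
  assumes z: "(z::'a::ring_1) \<in> Jr" and w: "w \<in> Jr"
  shows "z + w \<in> Jr"
proof (rule JrI)
  fix r
  obtain v where v: "(1 + r * z) * v = 1" "v * (1 + r * z) = 1" using JrD[OF z, of r] by (rule unitE)
  have "(1 + r * z) * (1 + (v * r) * w) \<in> units_of_ring"
    using JrD[OF z, of r] JrD[OF w, of "v * r"] by (rule unit_mult)
  moreover have "(1 + r * z) * (1 + (v * r) * w) = 1 + r * (z + w)"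
  proof -
    have "(1 + r * z) * (1 + (v * r) * w) = (1 + r * z) + ((1 + r * z) * v) * r * w"
      by (simp add: distrib_left distrib_right mult.assoc)
    then show ?thesis by (simp only: v(1) mult_1_left) (simp add: algebra_simps)
  qed
  ultimately show "1 + r * (z + w) \<in> units_of_ring" by simp
qed

lemma Jr_left: "(z::'a::ring_1) \<in> Jr \<Longrightarrow> s * z \<in> Jr"
  by (rule JrI) (metis JrD mult.assoc)

lemma Jr_right: "(z::'a::ring_1) \<in> Jr \<Longrightarrow> z * s \<in> Jr"
proof (rule JrI)
  fix r assume "z \<in> Jr"
  then have "1 + s * (r * z) \<in> units_of_ring" using JrD[of z "s * r"] by (simp add: mult.assoc)
  then have "1 + (r * z) * s \<in> units_of_ring" by (rule one_plus_swap)
  then show "1 + r * (z * s) \<in> units_of_ring" by (simp add: mult.assoc)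
qed

lemma Jr_uminus: "(z::'a::ring_1) \<in> Jr \<Longrightarrow> - z \<in> Jr"
  using Jr_left[of z "-1"] by simp

lemma Jr_diff: "(z::'a::ring_1) \<in> Jr \<Longrightarrow> w \<in> Jr \<Longrightarrow> z - w \<in> Jr"
  using Jr_add[of z "-w"] Jr_uminus[of w] by simp

lemma Jr_zero: "(0::'a::ring_1) \<in> Jr"
  by (rule JrI) (simp add: unit_one)

lemma Jr_pow_cong:
  assumes "(x::'a::ring_1) - y \<in> Jr"
  shows "x ^ n - y ^ n \<in> Jr"
proof (induct n)
  case 0 then show ?case by (simp add: Jr_zero)
next
  case (Suc n)
  have "x ^ Suc n - y ^ Suc n = x ^ n * (x - y) + (x ^ n - y ^ n) * y"
    by (simp add: algebra_simps power_commutes)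
  then show ?case using Jr_add[OF Jr_left[OF assms] Jr_right[OF Suc]] by simp
qed

lemma Jr_of_nil_mult:
  assumes "\<And>r. r * (z::'a::ring_1) \<in> nilpotents"
  shows "z \<in> Jr"
  by (rule JrI) (rule unit_one_plus_nil[OF assms])

lemma Jr_nil:
  assumes W: "WUU TYPE('a::ring_1)" and z: "(z::'a) \<in> Jr"
  shows "z \<in> nilpotents"
proof (rule ccontr)
  assume nz: "z \<notin> nilpotents"
  have u1: "1 + z \<in> units_of_ring" using JrD[OF z, of 1] by simp
  have u2: "1 - z \<in> units_of_ring" using JrD[OF z, of "-1"] by simp
  obtain p where p: "p \<in> nilpotents" "1 + z = p + 1 \<or> 1 + z = p - 1" using WUU_unit[OF W u1] by blast
  obtain q where q: "q \<in> nilpotents" "1 - z = q + 1 \<or> 1 - z = q - 1" using WUU_unit[OF W u2] by blast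
  have pz: "p = z + 2"
  proof -
    from p(2) have h: "1 + z = p - 1"
    proof
      assume "1 + z = p + 1" then have "z = p" by simp
      with nz p(1) show ?thesis by simp
    qed
    have "p = (p - 1) + 1" by simp
    also have "\<dots> = (1 + z) + 1" by (simp only: h[symmetric])
    also have "\<dots> = z + (1 + 1)" by (simp only: ac_simps)
    finally show ?thesis by (simp only: one_add_one)
  qed
  have qz: "q = 2 - z"
  proof -
    from q(2) have h: "1 - z = q - 1"
    proof
      assume h2: "1 - z = q + 1"
      have "z = 1 - (1 - z)" by simp
      also have "\<dots> = 1 - (q + 1)" by (simp only: h2)
      finally have "z = 1 - (q + 1)" .
      then have "z = - q" by simp
      with nz nil_uminus[OF q(1)] show ?thesis by simp
    qed
    have "q = (q - 1) + 1" by simp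
    also have "\<dots> = (1 - z) + 1" by (simp only: h[symmetric])
    also have "\<dots> = (1 + 1) - z" by (simp add: algebra_simps)
    finally show ?thesis by (simp only: one_add_one)
  qed
  have z2: "2 * z = z * 2" using mult_of_nat_commute[of 2 z] by simp
  have c: "p * q = q * p" unfolding pz qz
    by (simp add: distrib_left distrib_right left_diff_distrib right_diff_distrib z2)
  have "p + q \<in> nilpotents" by (rule nil_add_comm[OF c p(1) q(1)])
  moreover have "p + q = 2 * 2" unfolding pz qz by simp
  ultimately have "(2::'a) ^ 2 \<in> nilpotents" by (simp only: power2_eq_square)
  then have n2: "(2::'a) \<in> nilpotents" by (rule nil_pow)
  have c2: "p * 2 = 2 * p" unfolding pz by (simp add: distrib_left distrib_right z2)
  have "p - 2 \<in> nilpotents" by (rule nil_diff_comm[OF c2 p(1) n2])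
  then show False using nz pz by simp
qed

lemma Jr_pow_nil:
  assumes "WUU TYPE('a::ring_1)" "(x::'a) ^ n \<in> Jr"
  shows "x \<in> nilpotents"
  using Jr_nil[OF assms] by (rule nil_pow)



fun Gs :: "'a::ring_1 \<Rightarrow> 'a \<Rightarrow> nat \<Rightarrow> 'a" where
  "Gs f t 0 = 0"
| "Gs f t (Suc 0) = f"
| "Gs f t (Suc (Suc j)) = t * (Gs f t (Suc j) + Gs f t j)"

declare Gs.simps(3)[simp del]

lemma Gs_props:
  assumes ft: "f * t = t" and tf: "t * f = t" and ff: "(f::'a::ring_1) * f = f"
  shows "(f * Gs f t j = Gs f t j \<and> Gs f t j * f = Gs f t j \<and> t * Gs f t j = Gs f t j * t) \<and>
         (f * Gs f t (Suc j) = Gs f t (Suc j) \<and> Gs f t (Suc j) * f = Gs f t (Suc j) \<and>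
          t * Gs f t (Suc j) = Gs f t (Suc j) * t)"
proof (induct j)
  case 0 then show ?case using ft tf ff by simp
next
  case (Suc j)
  let ?A = "Gs f t (Suc j)" and ?B = "Gs f t j"
  have 1: "f * (t * (?A + ?B)) = t * (?A + ?B)" by (simp add: mult.assoc[symmetric] ft)
  have 2: "t * (?A + ?B) * f = t * (?A + ?B)" using Suc by (simp add: mult.assoc distrib_right)
  have tA: "t * ?A = ?A * t" and tB: "t * ?B = ?B * t" using Suc by blast+
  have 3: "t * (t * (?A + ?B)) = t * (?A + ?B) * t"
    by (simp add: distrib_left distrib_right mult.assoc[symmetric] tA tB)
  show ?case
    apply (simp only: Gs.simps(3))
    using Suc 1 2 3 by blast
qed

lemma Gs_f1: "f * t = t \<Longrightarrow> t * f = t \<Longrightarrow> (f::'a::ring_1) * f = f \<Longrightarrow> f * Gs f t j = Gs f t j"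
  using Gs_props by blast
lemma Gs_f2: "f * t = t \<Longrightarrow> t * f = t \<Longrightarrow> (f::'a::ring_1) * f = f \<Longrightarrow> Gs f t j * f = Gs f t j"
  using Gs_props by blast
lemma Gs_t: "f * t = t \<Longrightarrow> t * f = t \<Longrightarrow> (f::'a::ring_1) * f = f \<Longrightarrow> t * Gs f t j = Gs f t j * t"
  using Gs_props by blast

lemma step_identity:
  fixes A B C D x y :: "'a::ring_1"
  assumes xx: "x * x = 0" and yy: "y * y = 0" and Ay: "A * y = 0" and By: "B * y = 0" and Cy: "C * y = 0"
    and D: "D = A * (x * y) + B * (x * y)" and yA: "y * A = y * (B * (x * y)) + y * (C * (x * y))"
  shows "(A + B * x + y * B + y * C * x) * (x + y + x * y) = D + A * x + y * A + y * B * x"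
proof -
  have xx': "x * (x * z) = 0" for z using xx by (simp add: mult.assoc[symmetric])
  have yy': "y * (y * z) = 0" for z using yy by (simp add: mult.assoc[symmetric])
  have Ay': "A * (y * z) = 0" for z using Ay by (simp add: mult.assoc[symmetric])
  have By': "B * (y * z) = 0" for z using By by (simp add: mult.assoc[symmetric])
  have Cy': "C * (y * z) = 0" for z using Cy by (simp add: mult.assoc[symmetric])
  have L: "(A + B * x + y * B + y * C * x) * (x + y + x * y) =
     A * x + A * (x * y) + B * (x * y) + y * (B * x) + y * (B * (x * y)) + y * (C * (x * y))"
    apply (simp only: distrib_left distrib_right mult.assoc xx xx' yy yy' Ay Ay' By By' Cy Cy'
        mult_zero_left mult_zero_right add_0_left add_0_right)
    apply (simp only: add.assoc add.commute add.left_commute)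
    done
  show ?thesis
    apply (simp only: L D yA)
    apply (simp only: mult.assoc add.assoc add.commute add.left_commute)
    done
qed

lemma m_pow:
  fixes f x y :: "'a::ring_1"
  assumes ff: "f * f = f" and fx: "f * x = x" and xf: "x * f = 0" and fy: "f * y = 0" and yf: "y * f = y"
  shows "(x + y + x * y) ^ Suc j = Gs f (x * y) (Suc (Suc j)) + Gs f (x * y) (Suc j) * x
           + y * Gs f (x * y) (Suc j) + y * Gs f (x * y) j * x"
proof -
  let ?t = "x * y"
  have ft: "f * ?t = ?t" using fx by (simp add: mult.assoc[symmetric])
  have tf: "?t * f = ?t" using yf by (simp add: mult.assoc)
  have xx: "x * x = 0"
  proof -
    have "x * x = x * (f * x)" using fx by simp
    also have "\<dots> = (x * f) * x" by (simp add: mult.assoc)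
    finally show ?thesis using xf by simp
  qed
  have yy: "y * y = 0"
  proof -
    have "y * y = (y * f) * y" using yf by simp
    also have "\<dots> = y * (f * y)" by (simp add: mult.assoc)
    finally show ?thesis using fy by simp
  qed
  have Gy: "Gs f ?t k * y = 0" for k
  proof -
    have "Gs f ?t k * y = (Gs f ?t k * f) * y" using Gs_f2[OF ft tf ff] by simp
    also have "\<dots> = Gs f ?t k * (f * y)" by (simp add: mult.assoc)
    finally show ?thesis using fy by simp
  qed
  show ?thesis
  proof (induct j)
    case 0
    have "Gs f ?t (Suc (Suc 0)) = ?t" using tf by (simp add: Gs.simps(3))
    then show ?case using fx yf by (simp add: ac_simps)
  next
    case (Suc j)
    let ?A = "Gs f ?t (Suc (Suc j))" and ?B = "Gs f ?t (Suc j)" and ?C = "Gs f ?t j"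
      and ?D = "Gs f ?t (Suc (Suc (Suc j)))"
    have tA: "?t * ?A = ?A * ?t" and tB: "?t * ?B = ?B * ?t" and tC: "?t * ?C = ?C * ?t"
      using Gs_t[OF ft tf ff] by blast+
    have "?D = ?t * (?A + ?B)" by (rule Gs.simps(3))
    also have "\<dots> = ?t * ?A + ?t * ?B" by (rule distrib_left)
    finally have D: "?D = ?A * ?t + ?B * ?t" by (simp only: tA tB)
    have "y * ?A = y * (?t * (?B + ?C))" by (simp only: Gs.simps(3))
    also have "\<dots> = y * (?t * ?B) + y * (?t * ?C)" by (simp only: distrib_left)
    finally have yA: "y * ?A = y * (?B * ?t) + y * (?C * ?t)" by (simp only: tB tC)
    have "(x + y + x * y) ^ Suc (Suc j) = (x + y + x * y) ^ Suc j * (x + y + x * y)"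
      by (rule power_Suc2)
    also have "\<dots> = (?A + ?B * x + y * ?B + y * ?C * x) * (x + y + x * y)"
      by (simp only: Suc)
    also have "\<dots> = ?D + ?A * x + y * ?A + y * ?B * x"
      by (rule step_identity[OF xx yy Gy Gy Gy D yA])
    finally show ?case .
  qed
qed

lemma m_pow_corner:
  fixes f x y :: "'a::ring_1"
  assumes ff: "f * f = f" and fx: "f * x = x" and xf: "x * f = 0" and fy: "f * y = 0" and yf: "y * f = y"
  shows "f * (x + y + x * y) ^ Suc j * f = Gs f (x * y) (Suc (Suc j))"
proof -
  let ?t = "x * y"
  have ft: "f * ?t = ?t" using fx by (simp add: mult.assoc[symmetric])
  have tf: "?t * f = ?t" using yf by (simp add: mult.assoc)
  let ?A = "Gs f ?t (Suc (Suc j))" and ?B = "Gs f ?t (Suc j)" and ?C = "Gs f ?t j"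
  have a1: "f * ?A = ?A" by (rule Gs_f1[OF ft tf ff])
  have a2: "?A * f = ?A" by (rule Gs_f2[OF ft tf ff])
  have fA: "f * ?A * f = ?A" by (simp only: a1 a2)
  have fB: "f * (?B * x) * f = 0" using xf by (simp add: mult.assoc)
  have fyB: "f * (y * ?B) * f = 0" using fy by (simp add: mult.assoc[symmetric])
  have fyC: "f * (y * ?C * x) * f = 0" using fy by (simp add: mult.assoc[symmetric])
  show ?thesis unfolding m_pow[OF ff fx xf fy yf, of j]
    by (simp only: distrib_left distrib_right fA fB fyB fyC add_0_right)
qed

lemma Gs_backward:
  fixes f t :: "'a::ring_1"
  assumes ft: "f * t = t" and tf: "t * f = t" and ff: "f * f = f"
  shows "\<forall>a. t ^ a * Gs f t (Suc j) = 0 \<and> t ^ Suc a * Gs f t j = 0 \<longrightarrow> t ^ (a + j) * f = 0"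
proof (induct j)
  case 0 then show ?case by simp
next
  case (Suc j)
  show ?case
  proof (intro allI impI)
    fix a assume h: "t ^ a * Gs f t (Suc (Suc j)) = 0 \<and> t ^ Suc a * Gs f t (Suc j) = 0"
    have e1: "t ^ a * Gs f t (Suc (Suc j)) = t ^ Suc a * Gs f t (Suc j) + t ^ Suc a * Gs f t j"
      by (simp only: Gs.simps(3) distrib_left power_Suc2 mult.assoc)
    have "t ^ Suc a * Gs f t (Suc j) + t ^ Suc a * Gs f t j = 0" using e1 h by simp
    then have 1: "t ^ Suc a * Gs f t j = 0" using h by simp
    have "t ^ Suc (Suc a) * Gs f t j = t * (t ^ Suc a * Gs f t j)"
      by (simp only: power_Suc mult.assoc)
    then have 2: "t ^ Suc (Suc a) * Gs f t j = 0" using 1 by simp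
    have "t ^ (Suc a + j) * f = 0" using Suc h 2 by blast
    then show "t ^ (a + Suc j) * f = 0" by simp
  qed
qed

lemma offdiag_core:
  fixes f x y :: "'a::ring_1"
  assumes ff: "f * f = f" and fx: "f * x = x" and xf: "x * f = 0" and fy: "f * y = 0" and yf: "y * f = y"
    and m: "x + y + x * y \<in> nilpotents"
  shows "x * y \<in> nilpotents"
proof -
  let ?t = "x * y" and ?m = "x + y + x * y"
  have ft: "f * ?t = ?t" using fx by (simp add: mult.assoc[symmetric])
  have tf: "?t * f = ?t" using yf by (simp add: mult.assoc)
  obtain n where n: "?m ^ n = 0" using m by (rule nilE)
  have z1: "?m ^ Suc (Suc n) = 0" using n by (simp add: power_add[of _ n 2, simplified] power_Suc2 mult.assoc)
  have z2: "?m ^ Suc (Suc (Suc n)) = 0" using n by (simp add: power_Suc2)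
  have g1: "Gs f ?t (Suc (Suc (Suc n))) = 0"
    using m_pow_corner[OF ff fx xf fy yf, of "Suc n"] z1 by simp
  have g2: "Gs f ?t (Suc (Suc (Suc (Suc n)))) = 0"
    using m_pow_corner[OF ff fx xf fy yf, of "Suc (Suc n)"] z2 by simp
  have "Gs f ?t (Suc (Suc (Suc (Suc n)))) = ?t * (Gs f ?t (Suc (Suc (Suc n))) + Gs f ?t (Suc (Suc n)))"
    by (rule Gs.simps(3))
  then have "Gs f ?t (Suc (Suc (Suc (Suc n)))) = ?t * Gs f ?t (Suc (Suc n))"
    using g1 by simp
  then have g3: "?t * Gs f ?t (Suc (Suc n)) = 0" using g2 by simp
  have "?t ^ (0 + Suc (Suc n)) * f = 0"
    using Gs_backward[OF ft tf ff, of "Suc (Suc n)", rule_format, of 0] g1 g3 by simp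
  then have "?t ^ Suc (Suc n) * f = 0" by simp
  then have "?t ^ Suc (Suc n) * f * ?t = 0" by simp
  moreover have "?t ^ Suc (Suc (Suc n)) = ?t ^ Suc (Suc n) * f * ?t"
    by (simp only: power_Suc2[of ?t "Suc (Suc n)"] mult.assoc ft)
  ultimately have "?t ^ Suc (Suc (Suc n)) = 0" by simp
  then show ?thesis by (rule nilI)
qed



definition cm :: "'a::ring_1 \<Rightarrow> 'a \<Rightarrow> bool" where "cm x y \<longleftrightarrow> x * y = y * x"

lemma cm_refl: "cm x x" by (simp add: cm_def)
lemma cm_0: "cm x 0" by (simp add: cm_def)
lemma cm_1: "cm x 1" by (simp add: cm_def)
lemma cm_add: "cm x y \<Longrightarrow> cm x z \<Longrightarrow> cm x (y + z)" by (simp add: cm_def algebra_simps)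
lemma cm_diff: "cm x y \<Longrightarrow> cm x z \<Longrightarrow> cm x (y - z)" by (simp add: cm_def algebra_simps)
lemma cm_uminus: "cm x y \<Longrightarrow> cm x (- y)" by (simp add: cm_def algebra_simps)
lemma cm_mult: "cm x y \<Longrightarrow> cm x z \<Longrightarrow> cm x (y * z)"
  unfolding cm_def by (metis mult.assoc)
lemma cm_sym: "cm x y \<Longrightarrow> cm y x" by (simp add: cm_def)
lemma cm_diff_left: "cm x z \<Longrightarrow> cm y z \<Longrightarrow> cm (x - y) z" by (simp add: cm_def algebra_simps)
lemma cm_pow: "cm x y \<Longrightarrow> cm x (y ^ n)"
  by (induct n) (simp_all add: cm_1 cm_mult)

lemma cm_add_left: "cm x z \<Longrightarrow> cm y z \<Longrightarrow> cm (x + y) z" by (simp add: cm_def algebra_simps)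
lemma cm_uminus_left: "cm x z \<Longrightarrow> cm (- x) z" by (simp add: cm_def algebra_simps)
lemma cm_mult_left: "cm x z \<Longrightarrow> cm y z \<Longrightarrow> cm (x * y) z"
  unfolding cm_def by (metis mult.assoc)

inductive pe :: "'a::ring_1 \<Rightarrow> 'a \<Rightarrow> bool" for e where
  pe_gen: "pe e e"
| pe_one: "pe e 1"
| pe_add: "pe e x \<Longrightarrow> pe e y \<Longrightarrow> pe e (x + y)"
| pe_diff: "pe e x \<Longrightarrow> pe e y \<Longrightarrow> pe e (x - y)"
| pe_mult: "pe e x \<Longrightarrow> pe e y \<Longrightarrow> pe e (x * y)"

lemma pe_cm_gen: "pe e x \<Longrightarrow> cm e x"
  by (induct rule: pe.induct) (auto intro: cm_refl cm_1 cm_add cm_diff cm_mult)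

lemma pe_cm: "pe e x \<Longrightarrow> pe e y \<Longrightarrow> cm x y"
proof (induct rule: pe.induct)
  case pe_gen then show ?case by (rule pe_cm_gen)
next
  case pe_one then show ?case by (simp add: cm_def)
next
  case (pe_add x y) then show ?case by (simp add: cm_add_left)
next
  case (pe_diff x y) then show ?case by (simp add: cm_diff_left)
next
  case (pe_mult x y) then show ?case by (simp add: cm_mult_left)
qed

lemmas cm_intros = cm_refl cm_0 cm_1 cm_add cm_diff cm_uminus cm_mult cm_pow

lemma idem_pow: "(g::'a::ring_1) * g = g \<Longrightarrow> g ^ Suc n = g"
  by (induct n) (simp_all add: mult.assoc[symmetric])

lemma lift_aux:
  fixes a :: "'a::ring_1"
  shows "\<forall>e. e * a = a * e \<longrightarrow> a - e \<in> nilpotents \<longrightarrow> (e - e * e) ^ m = 0 \<longrightarrow> strongly_nil_clean_elem a"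
proof (induct m rule: less_induct)
  case (less m)
  show ?case
  proof (intro allI impI)
    fix e assume ea: "e * a = a * e" and ae: "a - e \<in> nilpotents" and wm: "(e - e * e) ^ m = 0"
    show "strongly_nil_clean_elem a"
    proof (cases "m \<le> 1")
      case True
      have ee: "e * e = e"
      proof (cases "m = 0")
        case True
        then have "(1::'a) = 0" using wm by simp
        then have "\<And>z::'a. z = 0" by (metis mult_1_right mult_zero_right)
        then show ?thesis by metis
      next
        case False
        then have "m = 1" using \<open>m \<le> 1\<close> by simp
        then show ?thesis using wm by simp
      qed
      have "e * (a - e) = (a - e) * e" using ea ee by (simp add: algebra_simps)
      then show ?thesis unfolding strongly_nil_clean_elem_def idempotents_def
        using ee ae by (intro exI[of _ e] exI[of _ "a - e"]) simp
    next
      case False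
      let ?w = "e - e * e"
      define e' where "e' = e*e + e*e + e*e - e*e*e - e*e*e"
      define r where "r = 1 + 1 + 1 + e + e + e + e - e*e - e*e - e*e - e*e"
      define m' where "m' = Suc m div 2"
      have m'm: "m' < m" using False unfolding m'_def by simp
      have m'2: "m \<le> 2 * m'" unfolding m'_def by simp
      have cae: "cm a e" using ea by (simp add: cm_def)
      have cee: "cm e e" by (rule cm_refl)
      have ce'a: "e' * a = a * e'"
      proof -
        have "cm a e'" unfolding e'_def using cae by (intro cm_intros; assumption)
        then show ?thesis by (simp add: cm_def)
      qed
      have ide: "e' - e' * e' = ?w * ?w * r" unfolding e'_def r_def
        apply (simp only: distrib_left distrib_right left_diff_distrib right_diff_distrib mult.assoc mult_1_left mult_1_right)
        apply (simp add: algebra_simps)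
        done
      have ide2: "e - e' = ?w * (1 - e - e)" unfolding e'_def
        apply (simp only: distrib_left distrib_right left_diff_distrib right_diff_distrib mult.assoc mult_1_left mult_1_right)
        apply (simp add: algebra_simps)
        done
      have wn: "?w \<in> nilpotents" using wm by (rule nilI)
      have cwd: "?w * (1 - e - e) = (1 - e - e) * ?w"
      proof -
        have "cm e (1 - e - e)" using cee by (intro cm_intros; assumption)
        moreover have "cm (e * e) (1 - e - e)"
          by (simp add: cm_def algebra_simps)
        ultimately have "cm ?w (1 - e - e)" by (rule cm_diff_left)
        then show ?thesis by (simp add: cm_def)
      qed
      have n1: "?w * (1 - e - e) \<in> nilpotents" by (rule nil_mult_comm(1)[OF cwd wn])
      have c2: "(a - e) * (?w * (1 - e - e)) = (?w * (1 - e - e)) * (a - e)"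
      proof -
        have "cm a (?w * (1 - e - e))" using cae by (intro cm_intros; assumption)
        moreover have "cm e (?w * (1 - e - e))" using cee by (intro cm_intros; assumption)
        ultimately have "cm (a - e) (?w * (1 - e - e))" by (rule cm_diff_left)
        then show ?thesis by (simp add: cm_def)
      qed
      have "a - e' = (a - e) + (e - e')" by simp
      also have "\<dots> = (a - e) + ?w * (1 - e - e)" by (simp only: ide2)
      finally have eqa: "a - e' = (a - e) + ?w * (1 - e - e)" .
      have ae': "a - e' \<in> nilpotents" unfolding eqa by (rule nil_add_comm[OF c2 ae n1])
      have cwr: "(?w * ?w) * r = r * (?w * ?w)"
      proof -
        have "pe e r" unfolding r_def by (intro pe.intros)
        moreover have "pe e (?w * ?w)" by (intro pe.intros)
        ultimately have "cm r (?w * ?w)" by (rule pe_cm)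
        then show ?thesis by (simp add: cm_def)
      qed
      have "(e' - e' * e') ^ m' = (?w * ?w) ^ m' * r ^ m'"
        unfolding ide by (rule comm_mult_pow[OF cwr])
      also have "(?w * ?w) ^ m' = ?w ^ (2 * m')" by (simp add: power_mult power2_eq_square)
      also have "?w ^ (2 * m') = ?w ^ m * ?w ^ (2 * m' - m)"
        using m'2 by (simp add: power_add[symmetric])
      finally have "(e' - e' * e') ^ m' = 0" using wm by simp
      then show ?thesis using less(1)[OF m'm] ce'a ae' by blast
    qed
  qed
qed

lemma lift:
  assumes "(a::'a::ring_1) - a * a \<in> nilpotents"
  shows "strongly_nil_clean_elem a"
proof -
  obtain m where "(a - a * a) ^ m = 0" using assms by (rule nilE)
  moreover have "a - a \<in> nilpotents" by (simp add: nilI[of 0 1])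
  ultimately show ?thesis using lift_aux[of a m] by blast
qed



section \<open>Off-diagonal elements are in the radical (2-part)\<close>

lemma offdiag_nil:
  fixes f x y k :: "'a::ring_1"
  assumes W: "WUU TYPE('a)" and ff: "f * f = f" and fx: "f * x = x" and xf: "x * f = 0"
    and fy: "f * y = 0" and yf: "y * f = y"
    and kk: "k * k = k" and kc: "\<And>z. k * z = z * k" and kx: "k * x = x" and ky: "k * y = y"
    and k2: "k + k \<in> nilpotents"
  shows "x * y \<in> nilpotents"
proof -
  let ?m = "x + y + x * y"
  have xx: "x * x = 0"
  proof -
    have "x * x = x * (f * x)" using fx by simp
    also have "\<dots> = (x * f) * x" by (simp add: mult.assoc)
    finally show ?thesis using xf by simp
  qed
  have yy: "y * y = 0"
  proof -
    have "y * y = (y * f) * y" using yf by simp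
    also have "\<dots> = y * (f * y)" by (simp add: mult.assoc)
    finally show ?thesis using fy by simp
  qed
  have xn: "x \<in> nilpotents" using xx by (intro nilI[of x 2]) (simp add: power2_eq_square)
  have yn: "y \<in> nilpotents" using yy by (intro nilI[of y 2]) (simp add: power2_eq_square)
  have u: "(1 + x) * (1 + y) \<in> units_of_ring"
    by (rule unit_mult[OF unit_one_plus_nil[OF xn] unit_one_plus_nil[OF yn]])
  have um: "(1 + x) * (1 + y) = 1 + ?m" by (simp add: algebra_simps)
  obtain q where q: "q \<in> nilpotents" "1 + ?m = q + 1 \<or> 1 + ?m = q - 1"
    using WUU_unit[OF W u] um by auto
  have mn: "?m \<in> nilpotents"
    using q(2)
  proof
    assume "1 + ?m = q + 1" then have "?m = q" by (simp add: add.commute)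
    then show ?thesis using q(1) by simp
  next
    assume h: "1 + ?m = q - 1"
    have km: "k * ?m = ?m" using kx ky by (simp add: distrib_left mult.assoc[symmetric])
    have "q = (q - 1) + 1" by simp
    also have "\<dots> = (1 + ?m) + 1" by (simp only: h)
    finally have qm: "q = ?m + (1 + 1)" by (simp add: ac_simps)
    have "k * q \<in> nilpotents" using nil_mult_comm(2)[OF kc[of q, symmetric] q(1)] .
    moreover have "k * q = ?m + (k + k)"
    proof -
      have "k * q = k * ?m + (k + k)" unfolding qm
        by (simp only: distrib_left[of k ?m "1+1"] distrib_left[of k 1 1] mult_1_right)
      then show ?thesis by (simp only: km)
    qed
    ultimately have h1: "?m + (k + k) \<in> nilpotents" by simp
    have kkz: "(k + k) * z = z * (k + k)" for z by (simp add: distrib_left distrib_right kc[of z])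
    have ckk: "(?m + (k + k)) * (k + k) = (k + k) * (?m + (k + k))"
      by (rule kkz[symmetric])
    have "(?m + (k + k)) - (k + k) \<in> nilpotents" by (rule nil_diff_comm[OF ckk h1 k2])
    then show ?thesis by simp
  qed
  show ?thesis by (rule offdiag_core[OF ff fx xf fy yf mn])
qed

lemma nil_swap:
  assumes "(a::'a::ring_1) * b \<in> nilpotents"
  shows "b * a \<in> nilpotents"
proof -
  obtain n where n: "(a * b) ^ n = 0" using assms by (rule nilE)
  have "(b * a) ^ Suc n = b * (a * b) ^ n * a"
  proof (induct n)
    case 0 then show ?case by simp
  next
    case (Suc n)
    have "(b * a) ^ Suc (Suc n) = (b * a) ^ Suc n * (b * a)" by (rule power_Suc2)
    also have "\<dots> = b * (a * b) ^ n * a * (b * a)" by (simp only: Suc)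
    also have "\<dots> = b * ((a * b) ^ n * (a * b)) * a" by (simp only: mult.assoc)
    also have "\<dots> = b * (a * b) ^ Suc n * a" by (simp only: power_Suc2)
    finally show ?case .
  qed
  then have "(b * a) ^ Suc n = 0" using n by simp
  then show ?thesis by (rule nilI)
qed

lemma tri_pow:
  assumes ws: "(w::'a::ring_1) * s = 0" and ww: "w * w = 0"
  shows "(s + w) ^ Suc n = s ^ Suc n + s ^ n * w"
proof (induct n)
  case 0 then show ?case by simp
next
  case (Suc n)
  have ws': "w * (s * z) = 0" for z using ws by (simp add: mult.assoc[symmetric])
  have ww': "w * (w * z) = 0" for z using ww by (simp add: mult.assoc[symmetric])
  have "(s + w) ^ Suc (Suc n) = (s + w) ^ Suc n * (s + w)" by (rule power_Suc2)
  also have "\<dots> = (s ^ Suc n + s ^ n * w) * (s + w)" by (simp only: Suc)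
  also have "\<dots> = s ^ Suc n * s + s ^ Suc n * w + s ^ n * (w * s) + s ^ n * (w * w)"
    by (simp only: distrib_left distrib_right mult.assoc add.assoc add.commute add.left_commute)
  also have "\<dots> = s ^ Suc (Suc n) + s ^ Suc n * w" using ws ww by (simp only: power_Suc2[symmetric]) simp
  finally show ?case .
qed

lemma offdiag_J:
  fixes f x k :: "'a::ring_1"
  assumes W: "WUU TYPE('a)" and ff: "f * f = f" and fx: "f * x = x" and xf: "x * f = 0"
    and kk: "k * k = k" and kc: "\<And>z. k * z = z * k" and kx: "k * x = x"
    and k2: "k + k \<in> nilpotents"
  shows "x \<in> Jr"
proof (rule Jr_of_nil_mult)
  fix r
  define y where "y = k * ((1 - f) * r * f)"
  have fk: "f * (k * z) = k * (f * z)" for z by (metis kc mult.assoc)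
  have f1f: "f * (1 - f) = 0" by (simp add: algebra_simps ff)
  have "f * y = k * (f * ((1 - f) * r * f))" unfolding y_def by (rule fk)
  also have "f * ((1 - f) * r * f) = 0" by (simp add: mult.assoc[symmetric] f1f)
  finally have fy: "f * y = 0" by simp
  have yf: "y * f = y" unfolding y_def by (simp add: mult.assoc ff)
  have ky: "k * y = y" unfolding y_def by (simp add: mult.assoc[symmetric] kk)
  have x1f: "x * (1 - f) = x" using xf by (simp add: algebra_simps)
  have xk: "x * k = x" using kx kc by metis
  have xy: "x * y = x * r * f"
  proof -
    have "x * y = (x * k) * ((1 - f) * r * f)" unfolding y_def by (simp add: mult.assoc)
    also have "\<dots> = (x * (1 - f)) * r * f" by (simp only: xk mult.assoc)
    finally show ?thesis by (simp only: x1f)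
  qed
  have sn: "x * r * f \<in> nilpotents"
    using offdiag_nil[OF W ff fx xf fy yf kk kc kx ky k2] xy by simp
  let ?s = "x * r * f" and ?w = "x * r * (1 - f)"
  have fx0: "(1 - f) * x = 0" using fx by (simp add: algebra_simps)
  have ws: "?w * ?s = 0"
  proof -
    have "?w * ?s = x * r * ((1 - f) * x) * r * f" by (simp add: mult.assoc)
    then show ?thesis using fx0 by simp
  qed
  have ww: "?w * ?w = 0"
  proof -
    have "?w * ?w = x * r * ((1 - f) * x) * r * (1 - f)" by (simp add: mult.assoc)
    then show ?thesis using fx0 by simp
  qed
  obtain n where n: "?s ^ n = 0" using sn by (rule nilE)
  have "x * r = ?s + ?w" by (simp add: algebra_simps)
  then have "(x * r) ^ Suc n = ?s ^ Suc n + ?s ^ n * ?w" using tri_pow[OF ws ww, of n] by simp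
  also have "\<dots> = 0" using n by (simp add: power_Suc2)
  finally have "x * r \<in> nilpotents" by (rule nilI)
  then show "r * x \<in> nilpotents" by (rule nil_swap)
qed

lemma two_part:
  fixes k e q :: "'a::ring_1"
  assumes W: "WUU TYPE('a)" and kk: "k * k = k" and kc: "\<And>z. k * z = z * k"
    and k2: "k + k \<in> nilpotents"
    and ee: "e * e = e" and ke: "k * e = e" and qn: "q \<in> nilpotents" and kq: "k * q = q"
  shows "(q + e) - (q + e) * (q + e) \<in> nilpotents"
proof -
  let ?B = "e * q * (1 - e)" and ?C = "(1 - e) * q * e"
  have ee': "e * (e * z) = e * z" for z by (simp add: mult.assoc[symmetric] ee)
  have ke': "k * (e * z) = e * z" for z by (simp add: mult.assoc[symmetric] ke)
  have kq': "k * (q * z) = q * z" for z by (simp add: mult.assoc[symmetric] kq)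
  have BJ: "?B \<in> Jr"
  proof (rule offdiag_J[OF W ee _ _ kk kc _ k2])
    show "e * ?B = ?B" by (simp add: algebra_simps ee')
    show "?B * e = 0" by (simp add: algebra_simps ee ee')
    show "k * ?B = ?B" by (simp add: mult.assoc ke')
  qed
  have CJ: "?C \<in> Jr"
  proof (rule offdiag_J[OF W _ _ _ kk kc _ k2])
    show "(1 - e) * (1 - e) = 1 - e" by (simp add: algebra_simps ee)
    show "(1 - e) * ?C = ?C" by (simp add: algebra_simps ee')
    show "?C * (1 - e) = 0" by (simp add: algebra_simps ee ee')
    show "k * ?C = ?C" by (simp add: algebra_simps ke' kq')
  qed
  define s where "s = e * q * e + (1 - e) * q * (1 - e)"
  define j where "j = ?B + ?C"
  have jJ: "j \<in> Jr" unfolding j_def using BJ CJ by (rule Jr_add)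
  have qs: "q = s + j" unfolding s_def j_def
    apply (simp only: distrib_left distrib_right left_diff_distrib right_diff_distrib mult.assoc mult_1_left mult_1_right)
    apply (simp add: algebra_simps)
    done
  obtain n where n: "q ^ n = 0" using qn by (rule nilE)
  have "s - q \<in> Jr" using Jr_uminus[OF jJ] qs by simp
  then have "s ^ n - q ^ n \<in> Jr" by (rule Jr_pow_cong)
  then have "s ^ n \<in> Jr" using n by simp
  then have sn: "s \<in> nilpotents" by (rule Jr_pow_nil[OF W])
  have es: "e * s = s * e" unfolding s_def
    apply (simp only: distrib_left distrib_right left_diff_distrib right_diff_distrib mult.assoc mult_1_left mult_1_right)
    apply (simp add: algebra_simps ee ee')
    done
  define w where "w = s * (1 - e - e - s)"
  have csw: "s * (1 - e - e - s) = (1 - e - e - s) * s"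
    by (simp add: algebra_simps es)
  have wn: "w \<in> nilpotents" unfolding w_def by (rule nil_mult_comm(1)[OF csw sn])
  define jj where "jj = j - s * j - j * s - j * j - j * e - e * j"
  have jjJ: "jj \<in> Jr" unfolding jj_def using jJ
    by (intro Jr_diff Jr_left Jr_right; assumption)
  have ide: "(s + j + e) - (s + j + e) * (s + j + e) = w + jj" unfolding w_def jj_def
    apply (simp only: distrib_left distrib_right left_diff_distrib right_diff_distrib mult.assoc mult_1_left mult_1_right)
    apply (simp add: algebra_simps ee es)
    done
  have "(q + e) - (q + e) * (q + e) = w + jj" using ide qs by simp
  then have "((q + e) - (q + e) * (q + e)) - w \<in> Jr" using jjJ by simp
  moreover obtain m where m: "w ^ m = 0" using wn by (rule nilE)
  ultimately have "((q + e) - (q + e) * (q + e)) ^ m - w ^ m \<in> Jr" by (intro Jr_pow_cong)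
  then have "((q + e) - (q + e) * (q + e)) ^ m \<in> Jr" using m by simp
  then show ?thesis by (rule Jr_pow_nil[OF W])
qed



lemma pe_cm': "pe b x \<Longrightarrow> pe b y \<Longrightarrow> x * y = y * x"
  using pe_cm[of b x y] by (simp add: cm_def)

lemma two_part_both:
  fixes k e q b :: "'a::ring_1"
  assumes W: "WUU TYPE('a)" and kk: "k * k = k" and kc: "\<And>z. k * z = z * k"
    and k2: "k + k \<in> nilpotents"
    and ee: "e * e = e" and ke: "k * e = e" and qn: "q \<in> nilpotents" and kq: "k * q = q"
    and b: "b = q + e \<or> b = q - e"
  shows "b - b * b \<in> nilpotents \<and> b + b * b \<in> nilpotents"
proof -
  have kb: "k * b = b" using b ke kq by (auto simp: algebra_simps)
  have kbb: "k * (b * b) = b * b" using kb by (simp add: mult.assoc[symmetric])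
  have kkz: "(k + k) * z = z * (k + k)" for z by (simp add: distrib_left distrib_right kc[of z])
  have t: "(k + k) * (b * b) = b * b + b * b" by (simp add: distrib_right kbb)
  have tn: "(k + k) * (b * b) \<in> nilpotents" by (rule nil_mult_comm(1)[OF kkz k2])
  have c1: "cm (b - b * b) ((k + k) * (b * b))"
  proof (rule cm_mult)
    show "cm (b - b * b) (k + k)" using kkz[of "b - b * b"] by (simp add: cm_def)
    show "cm (b - b * b) (b * b)" by (intro pe_cm[where e=b] pe.intros)
  qed
  have c2: "cm (b + b * b) ((k + k) * (b * b))"
  proof (rule cm_mult)
    show "cm (b + b * b) (k + k)" using kkz[of "b + b * b"] by (simp add: cm_def)
    show "cm (b + b * b) (b * b)" by (intro pe_cm[where e=b] pe.intros)
  qed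
  have one: "b - b * b \<in> nilpotents \<or> b + b * b \<in> nilpotents"
    using b
  proof
    assume "b = q + e" then show ?thesis using two_part[OF W kk kc k2 ee ke qn kq] by simp
  next
    assume bq: "b = q - e"
    have "(- q + e) - (- q + e) * (- q + e) \<in> nilpotents"
      using two_part[OF W kk kc k2 ee ke nil_uminus[OF qn]] kq by simp
    moreover have "(- q + e) - (- q + e) * (- q + e) = - (b + b * b)" unfolding bq
      apply (simp only: distrib_left distrib_right left_diff_distrib right_diff_distrib mult.assoc mult_1_left mult_1_right)
      apply (simp add: algebra_simps)
      done
    ultimately have "- (b + b * b) \<in> nilpotents" by simp
    then show ?thesis using nil_uminus_iff by blast
  qed
  show ?thesis
  proof (cases "b - b * b \<in> nilpotents")
    case True
    have "(b - b * b) + (k + k) * (b * b) \<in> nilpotents"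
      using nil_add_comm[OF c1[unfolded cm_def] True tn] .
    then show ?thesis using True t by (simp add: algebra_simps)
  next
    case False
    then have h: "b + b * b \<in> nilpotents" using one by simp
    have "(b + b * b) - (k + k) * (b * b) \<in> nilpotents"
      using nil_diff_comm[OF c2[unfolded cm_def] h tn] .
    then show ?thesis using h t by (simp add: algebra_simps)
  qed
qed

lemma six_nil:
  assumes W: "WUU TYPE('a::ring_1)" and G: "GWNC TYPE('a)"
  shows "(6::'a) \<in> nilpotents"
proof (cases "(2::'a) \<in> units_of_ring")
  case True
  obtain q where q: "q \<in> nilpotents" "(2::'a) = q + 1 \<or> 2 = q - 1" using WUU_unit[OF W True] by blast
  from q(2) show ?thesis
  proof
    assume "(2::'a) = q + 1"
    then have "q = 1" by (metis add_right_cancel one_add_one)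
    then have "(1::'a) \<in> nilpotents" using q(1) by simp
    then have "(6::'a) = 0" by (rule nil_zero_one)
    then show ?thesis by (simp add: nilI[of 0 1])
  next
    assume "(2::'a) = q - 1"
    then have "q = 3" by (metis diff_add_cancel numeral_plus_one semiring_norm(5))
    then have n3: "(3::'a) \<in> nilpotents" using q(1) by simp
    have "(3::'a) * 2 = 2 * 3" by simp
    then have "(3::'a) * 2 \<in> nilpotents" using nil_mult_comm(1)[OF _ n3] by blast
    then show ?thesis by simp
  qed
next
  case False
  obtain q e where qe: "q \<in> nilpotents" "e \<in> idempotents" "(2::'a) = q + e \<or> 2 = q - e"
    using G False unfolding GWNC_def by blast
  have ee: "e * e = e" using qe(2) by (simp add: idempotents_def)
  from qe(3) show ?thesis
  proof
    assume h: "(2::'a) = q + e"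
    then have ed: "e = 1 + 1 - q" by (simp add: algebra_simps)
    have "q * (1 + 1 + 1 - q) - (1 + 1) = e - e * e" unfolding ed
      apply (simp only: distrib_left distrib_right left_diff_distrib right_diff_distrib mult.assoc mult_1_left mult_1_right)
      apply (simp add: algebra_simps)
      done
    then have "q * (1 + 1 + 1 - q) = 1 + 1" using ee by simp
    moreover have "q * (1 + 1 + 1 - q) \<in> nilpotents"
      by (rule nil_mult_comm(1)[OF _ qe(1)], rule pe_cm'[where b=q]) (intro pe.intros)+
    ultimately have "(2::'a) \<in> nilpotents" by (simp add: one_add_one)
    then have "(2::'a) * 3 \<in> nilpotents" by (rule nil_mult_comm(1)[rotated]) simp
    then show ?thesis by simp
  next
    assume h: "(2::'a) = q - e"
    then have ed: "e = q - (1 + 1)" by (simp add: algebra_simps)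
    have "q * (1 + 1 + 1 + 1 + 1 - q) - (1 + 1 + 1 + 1 + 1 + 1) = e - e * e" unfolding ed
      apply (simp only: distrib_left distrib_right left_diff_distrib right_diff_distrib mult.assoc mult_1_left mult_1_right)
      apply (simp add: algebra_simps)
      done
    then have "q * (1 + 1 + 1 + 1 + 1 - q) = 1 + 1 + 1 + 1 + 1 + 1" using ee by simp
    moreover have "q * (1 + 1 + 1 + 1 + 1 - q) \<in> nilpotents"
      by (rule nil_mult_comm(1)[OF _ qe(1)], rule pe_cm'[where b=q]) (intro pe.intros)+
    moreover have "(1 + 1 + 1 + 1 + 1 + 1 :: 'a) = 6" by simp
    ultimately show ?thesis by simp
  qed
qed

lemma bez23: "\<exists>u v::int. u * 2 ^ a + v * 3 ^ b = 1"
proof -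
  have "coprime ((2::int) ^ a) (3 ^ b)" by simp
  then have "gcd ((2::int) ^ a) (3 ^ b) = 1" by (simp add: coprime_iff_gcd_eq_1)
  then show ?thesis using bezout_int[of "(2::int) ^ a" "3 ^ b"] by simp
qed

lemma zero23:
  assumes "(2::'a::ring_1) ^ a * g = 0" and "(3::'a) ^ b * g = 0"
  shows "g = 0"
proof -
  obtain u v :: int where uv: "u * 2 ^ a + v * 3 ^ b = 1" using bez23 by blast
  have "g = of_int (u * 2 ^ a + v * 3 ^ b) * g" using uv by simp
  also have "\<dots> = of_int u * (2 ^ a * g) + of_int v * (3 ^ b * g)"
    by (simp add: distrib_right mult.assoc)
  also have "\<dots> = 0" using assms by simp
  finally show ?thesis .
qed

lemma ksplit:
  assumes "(6::'a::ring_1) \<in> nilpotents"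
  shows "\<exists>k::'a. k * k = k \<and> (\<forall>z. k * z = z * k) \<and> k + k \<in> nilpotents \<and> (\<exists>n. 3 ^ n * (1 - k) = 0)"
proof -
  obtain n where n: "(6::'a) ^ n = 0" using assms by (rule nilE)
  obtain u v :: int where uv: "u * 2 ^ n + v * 3 ^ n = 1" using bez23 by blast
  have six: "(6::int) ^ n = 2 ^ n * 3 ^ n" by (simp add: power_mult_distrib[symmetric])
  have six': "(of_int (6 ^ n) :: 'a) = 0" using n by simp
  define k :: 'a where "k = of_int (v * 3 ^ n)"
  have i1: "(v * 3 ^ n) * (v * 3 ^ n) = v * 3 ^ n + (- (u * v)) * 6 ^ n"
  proof -
    have hvb: "v * 3 ^ n = 1 - u * 2 ^ n" using uv by simp
    have "(v * 3 ^ n) * (v * 3 ^ n) = (v * 3 ^ n) * (1 - u * 2 ^ n)" by (metis hvb)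
    also have "\<dots> = v * 3 ^ n + (- (u * v)) * (2 ^ n * 3 ^ n)" by (simp add: algebra_simps)
    finally show ?thesis unfolding six .
  qed
  have kk: "k * k = k"
  proof -
    have "k * k = of_int ((v * 3 ^ n) * (v * 3 ^ n))" unfolding k_def by simp
    also have "\<dots> = k + of_int (- (u * v)) * of_int (6 ^ n)" unfolding i1 k_def by simp
    finally show ?thesis using six' by simp
  qed
  have kc: "\<forall>z. k * z = z * k" unfolding k_def by (blast intro: mult_of_int_commute)
  have i2: "2 ^ n * (v * 3 ^ n) = v * (6::int) ^ n" unfolding six by simp
  have k2n: "(2::'a) ^ n * k = 0"
  proof -
    have "(2::'a) ^ n * k = of_int (2 ^ n * (v * 3 ^ n))" unfolding k_def by simp
    also have "\<dots> = of_int v * of_int (6 ^ n)" unfolding i2 by simp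
    finally show ?thesis using six' by simp
  qed
  have "(k + k) ^ Suc n = ((2::'a) * k) ^ Suc n" by (simp add: mult_2)
  also have "\<dots> = 2 ^ Suc n * k ^ Suc n" by (rule comm_mult_pow) (simp add: kc)
  also have "\<dots> = 2 * (2 ^ n * k)" using idem_pow[OF kk, of n] by (simp add: mult.assoc)
  also have "\<dots> = 0" using k2n by simp
  finally have k2: "k + k \<in> nilpotents" by (rule nilI)
  have hu: "1 - v * 3 ^ n = u * (2::int) ^ n" using uv by linarith
  have i3: "3 ^ n * (1 - v * 3 ^ n) = u * (6::int) ^ n" unfolding hu six by (simp add: algebra_simps)
  have "(3::'a) ^ n * (1 - k) = of_int (3 ^ n * (1 - v * 3 ^ n))" unfolding k_def by simp
  also have "\<dots> = of_int u * of_int (6 ^ n)" unfolding i3 by simp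
  also have "\<dots> = 0" using six' by simp
  finally have "(3::'a) ^ n * (1 - k) = 0" .
  then show ?thesis using kk kc k2 by blast
qed



lemma zero_g:
  fixes g :: "'a::ring_1"
  assumes gg: "g * g = g" and g2: "g + g \<in> nilpotents" and g3: "(3::'a) ^ n * g = 0"
  shows "g = 0"
proof -
  obtain N where N: "(g + g) ^ N = 0" using g2 by (rule nilE)
  have "(g + g) ^ Suc N = 0" using N by (simp add: power_Suc2)
  moreover have "(g + g) ^ Suc N = (2::'a) ^ Suc N * g"
  proof -
    have "(g + g) ^ Suc N = ((2::'a) * g) ^ Suc N" by (simp add: mult_2)
    also have "\<dots> = 2 ^ Suc N * g ^ Suc N" by (rule comm_mult_pow) (simp add: mult_2 mult_2_right)
    also have "\<dots> = 2 ^ Suc N * g" using idem_pow[OF gg] by simp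
    finally show ?thesis .
  qed
  ultimately have "(2::'a) ^ Suc N * g = 0" by simp
  then show ?thesis using g3 by (rule zero23)
qed

lemma three_idem:
  fixes c f :: "'a::ring_1"
  assumes W: "WUU TYPE('a)" and cc: "c * c = c" and cz: "\<And>z. c * z = z * c"
    and c3: "(3::'a) ^ n * c = 0" and ff: "f * f = f" and cf: "c * f = f"
  shows "f = 0 \<or> f = c"
proof -
  have f3: "(3::'a) ^ n * f = 0"
  proof -
    have "(3::'a) ^ n * f = ((3::'a) ^ n * c) * f" using cf by (simp add: mult.assoc)
    then show ?thesis using c3 by simp
  qed
  have uu: "(1 - (f + f)) * (1 - (f + f)) = 1"
  proof -
    have "(1 - (f + f)) * (1 - (f + f)) = 1 + ((f * f - f) + (f * f - f) + (f * f - f) + (f * f - f))"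
      apply (simp only: distrib_left distrib_right left_diff_distrib right_diff_distrib mult.assoc mult_1_left mult_1_right)
      apply (simp add: algebra_simps)
      done
    then show ?thesis using ff by simp
  qed
  have u: "1 - (f + f) \<in> units_of_ring" using uu uu by (rule unitI)
  obtain p where p: "p \<in> nilpotents" "1 - (f + f) = p + 1 \<or> 1 - (f + f) = p - 1"
    using WUU_unit[OF W u] by blast
  from p(2) show ?thesis
  proof
    assume h: "1 - (f + f) = p + 1"
    have "p = (p + 1) - 1" by simp
    also have "\<dots> = (1 - (f + f)) - 1" by (simp only: h)
    finally have "p = - (f + f)" by simp
    then have "f + f \<in> nilpotents" using p(1) nil_uminus_iff by metis
    then show ?thesis using zero_g[OF ff _ f3] by simp
  next
    assume h: "1 - (f + f) = p - 1"
    have "p = (p - 1) + 1" by simp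
    also have "\<dots> = (1 - (f + f)) + 1" by (simp only: h)
    finally have pf: "p = (1 - f) + (1 - f)" by (simp add: algebra_simps)
    define g where "g = c - f"
    have fc: "f * c = f" using cf cz[of f] by simp
    have gg: "g * g = g" unfolding g_def by (simp add: algebra_simps cc cf fc ff)
    have "c * p = g + g" unfolding pf g_def by (simp only: distrib_left right_diff_distrib mult_1_right cf)
    moreover have "c * p \<in> nilpotents" by (rule nil_mult_comm(2)[OF cz[symmetric] p(1)])
    ultimately have g2: "g + g \<in> nilpotents" by simp
    have g3: "(3::'a) ^ n * g = 0" unfolding g_def using c3 f3 by (simp add: right_diff_distrib)
    have "g = 0" by (rule zero_g[OF gg g2 g3])
    then show ?thesis unfolding g_def by simp
  qed
qed

lemma three_elem:
  fixes c a q e :: "'a::ring_1"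
  assumes W: "WUU TYPE('a)" and cc: "c * c = c" and cz: "\<And>z. c * z = z * c"
    and c3: "(3::'a) ^ n * c = 0" and qn: "q \<in> nilpotents" and ee: "e * e = e"
    and a: "a = q + e \<or> a = q - e"
  shows "c * a - (c * a) * (c * a) \<in> nilpotents \<or> c * a + (c * a) * (c * a) \<in> nilpotents"
proof -
  let ?p = "c * q" and ?f = "c * e"
  have pn: "?p \<in> nilpotents" by (rule nil_mult_comm(2)[OF cz[symmetric] qn])
  have fc: "e * c = c * e" using cz[of e] by simp
  have ff: "?f * ?f = ?f"
  proof -
    have "?f * ?f = c * (e * c) * e" by (simp add: mult.assoc)
    also have "\<dots> = (c * c) * (e * e)" by (simp only: fc mult.assoc)
    finally show ?thesis using cc ee by simp
  qed
  have cf: "c * ?f = ?f" by (simp add: mult.assoc[symmetric] cc)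
  have f01: "?f = 0 \<or> ?f = c" by (rule three_idem[OF W cc cz c3 ff cf])
  have pc: "?p * c = ?p" using cz[of q] cc by (metis mult.assoc)
  have cp: "c * ?p = ?p" using cc by (simp add: mult.assoc[symmetric])
  have pp1: "?p * (1 - ?p) = (1 - ?p) * ?p" by (simp add: algebra_simps)
  have pp2: "?p * (1 + ?p) = (1 + ?p) * ?p" by (simp add: algebra_simps)
  have pp3: "?p * (?p - 1) = (?p - 1) * ?p" by (simp add: algebra_simps)
  have n1: "?p * (1 - ?p) \<in> nilpotents" by (rule nil_mult_comm(1)[OF pp1 pn])
  have n2: "?p * (1 + ?p) \<in> nilpotents" by (rule nil_mult_comm(1)[OF pp2 pn])
  have n3: "?p * (?p - 1) \<in> nilpotents" by (rule nil_mult_comm(1)[OF pp3 pn])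
  have ca: "c * a = ?p + ?f \<or> c * a = ?p - ?f" using a by (auto simp: algebra_simps)
  show ?thesis
  proof (cases "?f = 0")
    case True
    then have "c * a = ?p" using ca by auto
    moreover have "?p - ?p * ?p = ?p * (1 - ?p)" by (simp add: algebra_simps)
    ultimately show ?thesis using n1 by simp
  next
    case False
    then have fc': "?f = c" using f01 by simp
    from ca show ?thesis
    proof
      assume "c * a = ?p + ?f"
      then have h: "c * a = ?p + c" using fc' by simp
      have "(?p + c) - (?p + c) * (?p + c) = - (?p * (1 + ?p))"
        apply (simp only: distrib_left distrib_right left_diff_distrib right_diff_distrib mult_1_left mult_1_right pc cp cc)
        apply (simp add: algebra_simps)
        done
      then show ?thesis using h nil_uminus[OF n2] by simp
    next
      assume "c * a = ?p - ?f"
      then have h: "c * a = ?p - c" using fc' by simp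
      have "(?p - c) + (?p - c) * (?p - c) = ?p * (?p - 1)"
        apply (simp only: distrib_left distrib_right left_diff_distrib right_diff_distrib mult_1_left mult_1_right pc cp cc)
        apply (simp add: algebra_simps)
        done
      then show ?thesis using h n3 by simp
    qed
  qed
qed

lemma decomp:
  assumes W: "WUU TYPE('a::ring_1)" and G: "GWNC TYPE('a)"
  shows "\<exists>q e. q \<in> nilpotents \<and> e * e = e \<and> ((a::'a) = q + e \<or> a = q - e)"
proof (cases "a \<in> units_of_ring")
  case True
  obtain q where "q \<in> nilpotents" "a = q + 1 \<or> a = q - 1" using WUU_unit[OF W True] by blast
  moreover have "(1::'a) * 1 = 1" by simp
  ultimately show ?thesis by blast
next
  case False
  then show ?thesis using G unfolding GWNC_def idempotents_def by blast
qed

lemma orth_nil: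
  fixes k x2 x3 :: "'a::ring_1"
  assumes kk: "k * k = k" and kz: "\<And>z. k * z = z * k"
    and x2: "k * x2 = x2" and x3: "(1 - k) * x3 = x3"
    and n2: "x2 \<in> nilpotents" and n3: "x3 \<in> nilpotents"
  shows "x2 + x3 \<in> nilpotents"
proof -
  have k1k: "k * (1 - k) = 0" by (simp add: algebra_simps kk)
  have a: "x2 * x3 = 0"
  proof -
    have "x2 * x3 = x2 * k * ((1 - k) * x3)" using x2 x3 kz[of x2] by simp
    also have "\<dots> = x2 * (k * (1 - k)) * x3" by (simp only: mult.assoc)
    finally show ?thesis using k1k by simp
  qed
  have b: "x3 * x2 = 0"
  proof -
    have "x3 * x2 = ((1 - k) * x3) * (k * x2)" using x2 x3 by simp
    also have "\<dots> = (1 - k) * (x3 * k) * x2" by (simp only: mult.assoc)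
    also have "\<dots> = (1 - k) * (k * x3) * x2" by (simp only: kz[of x3, symmetric])
    also have "\<dots> = ((1 - k) * k) * x3 * x2" by (simp only: mult.assoc)
    also have "(1 - k) * k = 0" by (simp add: algebra_simps kk)
    finally show ?thesis by simp
  qed
  show ?thesis by (rule nil_add_comm[OF _ n2 n3]) (simp add: a b)
qed

lemma backward:
  assumes W: "WUU TYPE('a::ring_1)" and G: "GWNC TYPE('a)"
  shows "strongly_weakly_nil_clean TYPE('a)"
  unfolding strongly_weakly_nil_clean_def
proof
  fix a :: 'a
  obtain q e where qe: "q \<in> nilpotents" "e * e = e" "a = q + e \<or> a = q - e"
    using decomp[OF W G] by blast
  obtain k :: 'a where kk: "k * k = k" and kz: "\<forall>z. k * z = z * k" and k2: "k + k \<in> nilpotents"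
    and n3: "\<exists>n. 3 ^ n * (1 - k) = 0"
    using ksplit[OF six_nil[OF W G]] by blast
  obtain n where c3: "(3::'a) ^ n * (1 - k) = 0" using n3 by blast
  have kz': "\<And>z. k * z = z * k" using kz by blast
  let ?c = "1 - k"
  have cc: "?c * ?c = ?c" by (simp add: algebra_simps kk)
  have cz: "\<And>z. ?c * z = z * ?c" by (simp add: left_diff_distrib right_diff_distrib kz')
  let ?b2 = "k * a" and ?b3 = "?c * a"
  have ke: "k * (k * e) = k * e" by (simp add: mult.assoc[symmetric] kk)
  have kq: "k * (k * q) = k * q" by (simp add: mult.assoc[symmetric] kk)
  have ee2: "(k * e) * (k * e) = k * e"
  proof -
    have "(k * e) * (k * e) = k * (e * k) * e" by (simp only: mult.assoc)
    also have "\<dots> = (k * k) * (e * e)" by (simp only: kz'[of e, symmetric] mult.assoc)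
    finally have "(k * e) * (k * e) = (k * k) * (e * e)" .
    then show ?thesis using kk qe(2) by simp
  qed
  have qn2: "k * q \<in> nilpotents" by (rule nil_mult_comm(2)[OF kz'[symmetric] qe(1)])
  have b2d: "?b2 = k * q + k * e \<or> ?b2 = k * q - k * e" using qe(3) by (auto simp: algebra_simps)
  have B2: "?b2 - ?b2 * ?b2 \<in> nilpotents \<and> ?b2 + ?b2 * ?b2 \<in> nilpotents"
    by (rule two_part_both[OF W kk kz' k2 ee2 ke qn2 kq b2d])
  have B3: "?b3 - ?b3 * ?b3 \<in> nilpotents \<or> ?b3 + ?b3 * ?b3 \<in> nilpotents"
    by (rule three_elem[OF W cc cz c3 qe(1) qe(2) qe(3)])
  have asum: "a = ?b2 + ?b3" by (simp add: algebra_simps)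
  have cross1: "?b2 * ?b3 = 0"
  proof -
    have "?b2 * ?b3 = k * (a * ?c) * a" by (simp add: mult.assoc)
    also have "\<dots> = (k * ?c) * (a * a)" by (simp only: cz[of a, symmetric] mult.assoc)
    also have "k * ?c = 0" by (simp add: algebra_simps kk)
    finally show ?thesis by simp
  qed
  have cross2: "?b3 * ?b2 = 0"
  proof -
    have "?b3 * ?b2 = ?c * (a * k) * a" by (simp add: mult.assoc)
    also have "\<dots> = (?c * k) * (a * a)" by (simp only: kz'[of a, symmetric] mult.assoc)
    also have "?c * k = 0" by (simp add: algebra_simps kk)
    finally show ?thesis by simp
  qed
  have aa: "a * a = ?b2 * ?b2 + ?b3 * ?b3"
  proof -
    have "a * a = (?b2 + ?b3) * (?b2 + ?b3)" using asum by simp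
    also have "\<dots> = ?b2 * ?b2 + ?b3 * ?b3 + (?b2 * ?b3 + ?b3 * ?b2)"
      by (simp only: distrib_left distrib_right add_ac)
    finally show ?thesis using cross1 cross2 by simp
  qed
  have k1: "k * (k * z) = k * z" for z using kk by (simp add: mult.assoc[symmetric])
  have k2x: "k * (?b2 - ?b2 * ?b2) = ?b2 - ?b2 * ?b2"
    by (simp only: right_diff_distrib mult.assoc[of k a] k1 mult.assoc[of "k * a"])
  have k2y: "k * (?b2 + ?b2 * ?b2) = ?b2 + ?b2 * ?b2"
    by (simp only: distrib_left mult.assoc[of k a] k1 mult.assoc[of "k * a"])
  have c3x: "?c * (?b3 - ?b3 * ?b3) = ?b3 - ?b3 * ?b3" and c3y: "?c * (?b3 + ?b3 * ?b3) = ?b3 + ?b3 * ?b3"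
  proof -
    have c1: "?c * (?c * z) = ?c * z" for z using cc by (simp add: mult.assoc[symmetric])
    show "?c * (?b3 - ?b3 * ?b3) = ?b3 - ?b3 * ?b3"
      by (simp only: right_diff_distrib mult.assoc[of ?c a] c1 mult.assoc[of "?c * a"])
    show "?c * (?b3 + ?b3 * ?b3) = ?b3 + ?b3 * ?b3"
      by (simp only: distrib_left mult.assoc[of ?c a] c1 mult.assoc[of "?c * a"])
  qed
  from B3 show "strongly_nil_clean_elem a \<or> strongly_nil_clean_elem (- a)"
  proof
    assume h: "?b3 - ?b3 * ?b3 \<in> nilpotents"
    have "(?b2 - ?b2 * ?b2) + (?b3 - ?b3 * ?b3) \<in> nilpotents"
      by (rule orth_nil[OF kk kz' k2x c3x]) (use B2 h in simp_all)
    moreover have "a - a * a = (?b2 - ?b2 * ?b2) + (?b3 - ?b3 * ?b3)"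
      by (subst aa, subst (1) asum) (simp add: algebra_simps)
    ultimately have "a - a * a \<in> nilpotents" by simp
    then show ?thesis using lift by blast
  next
    assume h: "?b3 + ?b3 * ?b3 \<in> nilpotents"
    have "(?b2 + ?b2 * ?b2) + (?b3 + ?b3 * ?b3) \<in> nilpotents"
      by (rule orth_nil[OF kk kz' k2y c3y]) (use B2 h in simp_all)
    moreover have "a + a * a = (?b2 + ?b2 * ?b2) + (?b3 + ?b3 * ?b3)"
      by (subst aa, subst (1) asum) (simp add: algebra_simps)
    ultimately have "a + a * a \<in> nilpotents" by simp
    then have "- a - (- a) * (- a) \<in> nilpotents" using nil_uminus[of "a + a * a"] by simp
    then show ?thesis using lift by blast
  qed
qed

lemma forward:
  assumes S: "strongly_weakly_nil_clean TYPE('a::ring_1)"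
  shows "WUU TYPE('a) \<and> GWNC TYPE('a)"
proof
  have snc: "strongly_nil_clean_elem x \<or> strongly_nil_clean_elem (- x)" for x :: 'a
    using S unfolding strongly_weakly_nil_clean_def by blast
  have unit_snc: "b + 1 = u" if u: "u \<in> units_of_ring" and e: "e * e = e" and b: "b \<in> nilpotents"
    and ue: "u = e + b" and eb: "e * b = b * e" for u e b :: 'a
  proof -
    have bu: "b * u = u * b" using ue eb by (simp add: algebra_simps)
    have "u - b \<in> units_of_ring" by (rule unit_sub_comm_nil[OF u b bu])
    then have "e \<in> units_of_ring" using ue by simp
    then have "e = 1" using e idem_unit by blast
    then show ?thesis using ue by (simp add: add.commute)
  qed
  show "WUU TYPE('a)"
    unfolding WUU_def
  proof (rule set_eqI, rule iffI)
    fix u :: 'a assume u: "u \<in> units_of_ring"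
    from snc[of u] show "u \<in> {q + 1 |q. q \<in> nilpotents} \<union> {q - 1 |q. q \<in> nilpotents}"
    proof
      assume "strongly_nil_clean_elem u"
      then obtain e b where "e * e = e" "b \<in> nilpotents" "u = e + b" "e * b = b * e"
        unfolding strongly_nil_clean_elem_def idempotents_def by blast
      then have "b + 1 = u" using unit_snc[OF u] by blast
      then show ?thesis using \<open>b \<in> nilpotents\<close> by blast
    next
      assume "strongly_nil_clean_elem (- u)"
      then obtain e b where "e * e = e" "b \<in> nilpotents" "- u = e + b" "e * b = b * e"
        unfolding strongly_nil_clean_elem_def idempotents_def by blast
      then have "b + 1 = - u" using unit_snc[OF unit_uminus[OF u]] by blast
      then have "- (b + 1) = - (- u)" by simp
      then have "u = (- b) - 1" by simp
      then show ?thesis using nil_uminus[OF \<open>b \<in> nilpotents\<close>] by blast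
    qed
  next
    fix u :: 'a assume "u \<in> {q + 1 |q. q \<in> nilpotents} \<union> {q - 1 |q. q \<in> nilpotents}"
    then show "u \<in> units_of_ring" using unit_nil_plus_one unit_nil_minus_one by blast
  qed
  show "GWNC TYPE('a)"
    unfolding GWNC_def
  proof (intro allI impI)
    fix a :: 'a
    from snc[of a] show "\<exists>q e. q \<in> nilpotents \<and> e \<in> idempotents \<and> (a = q + e \<or> a = q - e)"
    proof
      assume "strongly_nil_clean_elem a"
      then show ?thesis unfolding strongly_nil_clean_elem_def by (metis add.commute)
    next
      assume "strongly_nil_clean_elem (- a)"
      then obtain e b where "e \<in> idempotents" "b \<in> nilpotents" "- a = e + b"
        unfolding strongly_nil_clean_elem_def by blast
      moreover have "a = (- b) - e"
      proof -
        have "a = - (- a)" by simp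
        also have "\<dots> = - (e + b)" by (simp only: \<open>- a = e + b\<close>)
        finally show ?thesis by simp
      qed
      ultimately show ?thesis using nil_uminus by blast
    qed
  qed
qed

theorem lemma2p29:
  shows "strongly_weakly_nil_clean TYPE('a::ring_1) \<longleftrightarrow>
         (WUU TYPE('a) \<and> GWNC TYPE('a))"
  using forward backward by blast

end
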